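(* Let $H_{ij}$, $i=1,\ldots,b$, $j=1,\ldots,s_i$, be $n=\sum_is_i$ null hypotheses with $p$-values $P_{ij}$, where true-null $p$-values are $U(0,1)$ and the rows $(P_{i1},\ldots,P_{is_i})$, $i=1,\ldots,b$, are mutually independent, with arbitrary dependence within each row. Fix $\alpha\in(0,1)$ and $\lambda$ with $(2b+3)^{-2/(b+2)}\le\lambda<1$, and let $\widehat n_0=(n-R(\lambda)+s_{\max})/(1-\lambda)$, where $s_{\max}=\max_is_i$ and $R(\lambda)=\#\{(i,j):P_{ij}\le\lambda\}$. The method that rejects $H_{ij}$ if and only if $P_{ij}\le\alpha/\widehat n_0$ has familywise error rate at most $\alpha$ for every configuration of true and false null hypotheses.
   Context: The familywise error rate is $\Pr(V\ge1)$, where $V$ is the number of rejected true null hypotheses. *)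

theory Defs
  imports "HOL-Probability.Probability"
begin

definition hyp_idx :: "nat \<Rightarrow> (nat \<Rightarrow> nat) \<Rightarrow> (nat \<times> nat) set" where
  "hyp_idx b s = {(i, j). i \<in> {1..b} \<and> j \<in> {1..s i}}"

definition n_total :: "nat \<Rightarrow> (nat \<Rightarrow> nat) \<Rightarrow> nat" where
  "n_total b s = (\<Sum>i=1..b. s i)"

definition s_max :: "nat \<Rightarrow> (nat \<Rightarrow> nat) \<Rightarrow> nat" where
  "s_max b s = Max (s ` {1..b})"

definition R_count :: "nat \<Rightarrow> (nat \<Rightarrow> nat) \<Rightarrow> (nat \<Rightarrow> nat \<Rightarrow> 'a \<Rightarrow> real) \<Rightarrow> real \<Rightarrow> 'a \<Rightarrow> nat" where
  "R_count b s P lam \<omega> = card {(i, j) \<in> hyp_idx b s. P i j \<omega> \<le> lam}"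

definition n0_hat :: "nat \<Rightarrow> (nat \<Rightarrow> nat) \<Rightarrow> (nat \<Rightarrow> nat \<Rightarrow> 'a \<Rightarrow> real) \<Rightarrow> real \<Rightarrow> 'a \<Rightarrow> real" where
  "n0_hat b s P lam \<omega> =
     (real (n_total b s) - real (R_count b s P lam \<omega>) + real (s_max b s)) / (1 - lam)"

end

theory Submission
  imports Defs
begin


lemma frac_sum_le1:
  fixes y :: "'i \<Rightarrow> real"
  assumes fin: "finite I" and y: "\<And>i. i \<in> I \<Longrightarrow> 0 \<le> y i \<and> y i \<le> S" and S: "S > 0"
  shows "(\<Sum>i\<in>I. y i / (S + (\<Sum>k\<in>I-{i}. y k))) \<le> 1"
proof -
  define V where "V = (\<Sum>k\<in>I. y k)"
  have rem: "\<And>i. i \<in> I \<Longrightarrow> (\<Sum>k\<in>I-{i}. y k) = V - y i"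
    unfolding V_def using fin by (simp add: sum.remove)
  show ?thesis
  proof (cases "V = 0")
    case True
    then have "\<forall>i\<in>I. y i = 0" using sum_nonneg_eq_0_iff[OF fin] y unfolding V_def by blast
    then show ?thesis by simp
  next
    case False
    have V0: "V > 0" using False sum_nonneg[of I y] y unfolding V_def by force
    have "(\<Sum>i\<in>I. y i / (S + (\<Sum>k\<in>I-{i}. y k))) \<le> (\<Sum>i\<in>I. y i / V)"
    proof (rule sum_mono)
      fix i assume i: "i \<in> I"
      show "y i / (S + (\<Sum>k\<in>I-{i}. y k)) \<le> y i / V"
        using rem[OF i] y[OF i] V0 by (intro frac_le) auto
    qed
    also have "\<dots> = 1" using V0 by (simp add: sum_divide_distrib[symmetric] V_def)
    finally show ?thesis .
  qed
qed

context prob_space begin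

lemma unif_le:
  assumes X: "X \<in> borel_measurable M"
    and d: "distr M lborel X = uniform_measure lborel {0<..<1}" and x: "0 \<le> x" "x \<le> 1"
  shows "prob {\<omega>\<in>space M. X \<omega> \<le> x} = x"
proof -
  have Xl: "X \<in> measurable M lborel" using X by simp
  have "prob {\<omega>\<in>space M. X \<omega> \<le> x} = measure (distr M lborel X) {..x}"
    by (subst measure_distr[OF Xl]) (auto intro!: arg_cong[where f=prob])
  also have "\<dots> = measure lborel ({0<..<1} \<inter> {..x}) / measure lborel {0<..<(1::real)}"
    unfolding d by (subst measure_uniform_measure) auto
  also have "\<dots> = x"
  proof (cases "x < 1")
    case True
    then have "{0<..<1} \<inter> {..x} = {0<..x}" by auto
    then show ?thesis using x by simp
  next
    case False
    then have "{0<..<1} \<inter> {..x} = {0<..<(1::real)}" using x by auto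
    then show ?thesis using x False by simp
  qed
  finally show ?thesis .
qed

lemma unif_gt:
  assumes X: "X \<in> borel_measurable M"
    and d: "distr M lborel X = uniform_measure lborel {0<..<1}" and x: "0 \<le> x" "x \<le> 1"
  shows "prob {\<omega>\<in>space M. x < X \<omega>} = 1 - x"
proof -
  have "{\<omega>\<in>space M. x < X \<omega>} = space M - {\<omega>\<in>space M. X \<omega> \<le> x}" by auto
  then have "prob {\<omega>\<in>space M. x < X \<omega>} = 1 - prob {\<omega>\<in>space M. X \<omega> \<le> x}"
    using X by (simp add: prob_compl)
  then show ?thesis using unif_le[OF assms] by simp
qed

lemma indep_event:
  assumes ind: "indep_var borel U borel V" and A: "A \<in> sets borel" and B: "B \<in> sets borel"
  shows "prob {\<omega>\<in>space M. U \<omega> \<in> A \<and> V \<omega> \<in> B} =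
         prob {\<omega>\<in>space M. U \<omega> \<in> A} * prob {\<omega>\<in>space M. V \<omega> \<in> B}"
proof -
  have "prob {\<omega>\<in>space M. U \<omega> \<in> A \<and> V \<omega> \<in> B} = prob ((\<lambda>x. (U x, V x)) -` (A \<times> B) \<inter> space M)"
    by (auto intro!: arg_cong[where f=prob])
  also have "\<dots> = prob (U -` A \<inter> space M) * prob (V -` B \<inter> space M)"
    by (rule indep_varD[OF ind A B])
  also have "\<dots> = prob {\<omega>\<in>space M. U \<omega> \<in> A} * prob {\<omega>\<in>space M. V \<omega> \<in> B}"
    by (auto intro!: arg_cong2[where f="(*)"] arg_cong[where f=prob])
  finally show ?thesis .
qed

lemma decomp:
  fixes W :: "'a \<Rightarrow> real"
  assumes vals: "\<And>\<omega>. \<omega> \<in> space M \<Longrightarrow> \<exists>v\<le>N. W \<omega> = real v"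
    and ev: "\<And>v. {\<omega>\<in>space M. Phi \<omega> (real v) \<and> W \<omega> = real v} \<in> events"
  shows "prob {\<omega>\<in>space M. Phi \<omega> (W \<omega>)} =
         (\<Sum>v\<le>N. prob {\<omega>\<in>space M. Phi \<omega> (real v) \<and> W \<omega> = real v})"
proof -
  have "{\<omega>\<in>space M. Phi \<omega> (W \<omega>)} = (\<Union>v\<in>{..N}. {\<omega>\<in>space M. Phi \<omega> (real v) \<and> W \<omega> = real v})"
    using vals by fastforce
  moreover have "prob (\<Union>v\<in>{..N}. {\<omega>\<in>space M. Phi \<omega> (real v) \<and> W \<omega> = real v}) =
         (\<Sum>v\<le>N. prob {\<omega>\<in>space M. Phi \<omega> (real v) \<and> W \<omega> = real v})"
    by (rule finite_measure_finite_Union) (auto simp: ev disjoint_family_on_def)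
  ultimately show ?thesis by simp
qed

lemma integral_decomp:
  fixes W :: "'a \<Rightarrow> real"
  assumes vals: "\<And>\<omega>. \<omega> \<in> space M \<Longrightarrow> \<exists>v\<le>N. W \<omega> = real v"
    and G: "G \<in> events" and Wm: "W \<in> borel_measurable M" and S: "S > 0"
  shows "expectation (\<lambda>\<omega>. indicator G \<omega> / (S + W \<omega>)) =
         (\<Sum>v\<le>N. prob (G \<inter> {\<omega>\<in>space M. W \<omega> = real v}) / (S + real v))"
    and "integrable M (\<lambda>\<omega>. indicator G \<omega> / (S + W \<omega>))"
proof -
  let ?E = "\<lambda>v. G \<inter> {\<omega>\<in>space M. W \<omega> = real v}"
  have Ev: "?E v \<in> events" for v using G Wm by measurable
  have pw: "indicator G \<omega> / (S + W \<omega>) = (\<Sum>v\<le>N. indicator (?E v) \<omega> / (S + real v))"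
    if om: "\<omega> \<in> space M" for \<omega>
  proof -
    obtain v0 where v0: "v0 \<le> N" "W \<omega> = real v0" using vals[OF om] by blast
    have "(\<Sum>v\<le>N. indicator (?E v) \<omega> / (S + real v)) =
          (\<Sum>v\<le>N. if v = v0 then indicator G \<omega> / (S + W \<omega>) else 0)"
      using om v0 by (intro sum.cong) (auto simp: indicator_def)
    also have "\<dots> = indicator G \<omega> / (S + W \<omega>)" using v0 by simp
    finally show ?thesis by simp
  qed
  have int: "integrable M (\<lambda>\<omega>. indicator (?E v) \<omega> / (S + real v))" for v
    using Ev by (intro integrable_divide_zero integrable_real_indicator) (auto simp: emeasure_eq_measure)
  have "expectation (\<lambda>\<omega>. indicator G \<omega> / (S + W \<omega>)) =
        expectation (\<lambda>\<omega>. \<Sum>v\<le>N. indicator (?E v) \<omega> / (S + real v))"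
    using pw by (intro Bochner_Integration.integral_cong) auto
  also have "\<dots> = (\<Sum>v\<le>N. prob (?E v) / (S + real v))"
    using int Ev by (simp add: integral_divide_zero Int_absorb2 sets.sets_into_space)
  finally show "expectation (\<lambda>\<omega>. indicator G \<omega> / (S + W \<omega>)) =
         (\<Sum>v\<le>N. prob (G \<inter> {\<omega>\<in>space M. W \<omega> = real v}) / (S + real v))" .
  have "integrable M (\<lambda>\<omega>. \<Sum>v\<le>N. indicator (?E v) \<omega> / (S + real v))"
    using int by auto
  then show "integrable M (\<lambda>\<omega>. indicator G \<omega> / (S + W \<omega>))"
    using Bochner_Integration.integrable_cong[OF refl, of M "\<lambda>\<omega>. indicator G \<omega> / (S + W \<omega>)"] pw by auto
qed

end

lemma ind_meas[measurable]:
  fixes f :: "'a \<Rightarrow> real"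
  assumes [measurable]: "f \<in> borel_measurable M"
  shows "(\<lambda>\<omega>. if lam < f \<omega> then 1 else (0::real)) \<in> borel_measurable M"
  by measurable

lemma comp2_meas:
  assumes "k \<in> K" "j \<in> {1..s k}"
  shows "(\<lambda>z. z k j) \<in> borel_measurable (PiM K (\<lambda>k. PiM {1..(s k::nat)} (\<lambda>_. (borel::real measure))))"
  using measurable_compose[OF measurable_component_singleton[of k K "\<lambda>k. PiM {1..(s k::nat)} (\<lambda>_. (borel::real measure))"] measurable_component_singleton[of j "{1..s k}" "\<lambda>_. (borel::real measure)"]] assms
  by simp

lemma card_hyp_idx: "card (hyp_idx b s) = n_total b s"
proof -
  have "hyp_idx b s = Sigma {1..b} (\<lambda>i. {1..s i})" by (auto simp: hyp_idx_def)
  then show ?thesis by (simp add: card_SigmaI n_total_def)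
qed

lemma finite_hyp_idx: "finite (hyp_idx b s)"
proof -
  have "hyp_idx b s = Sigma {1..b} (\<lambda>i. {1..s i})" by (auto simp: hyp_idx_def)
  then show ?thesis by simp
qed

theorem mainTheorem6:
  fixes M :: "'a measure" and b :: nat and s :: "nat \<Rightarrow> nat"
    and P :: "nat \<Rightarrow> nat \<Rightarrow> 'a \<Rightarrow> real"
    and T :: "(nat \<times> nat) set" and \<alpha> lam :: real
  assumes "prob_space M"
    and "b \<ge> 1"
    and meas: "\<And>i j. (i, j) \<in> hyp_idx b s \<Longrightarrow> P i j \<in> borel_measurable M"
    and true_nulls: "T \<subseteq> hyp_idx b s"
    and unif: "\<And>i j. (i, j) \<in> T \<Longrightarrow>
                 distr M lborel (P i j) = uniform_measure lborel {0<..<1}"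
    and indep: "prob_space.indep_vars M (\<lambda>i. PiM {1..s i} (\<lambda>_. borel))
                  (\<lambda>i \<omega>. \<lambda>j\<in>{1..s i}. P i j \<omega>) {1..b}"
    and "0 < \<alpha>" and "\<alpha> < 1"
    and "(2 * real b + 3) powr (- 2 / (real b + 2)) \<le> lam" and "lam < 1"
  shows "measure M {\<omega> \<in> space M. \<exists>(i, j) \<in> T. P i j \<omega> \<le> \<alpha> / n0_hat b s P lam \<omega>} \<le> \<alpha>"
proof -
  interpret prob_space M by fact
  note a0 = \<open>0 < \<alpha>\<close> and a1 = \<open>\<alpha> < 1\<close> and l1 = \<open>lam < 1\<close>
  have l0: "0 < lam"
    using \<open>(2 * real b + 3) powr (- 2 / (real b + 2)) \<le> lam\<close> by (smt (verit) powr_gt_zero of_nat_0_le_iff)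
  define Tr where "Tr k = {j. (k,j) \<in> T}" for k
  define S where "S = real (s_max b s)"
  define c where "c = \<alpha> * (1 - lam)"
  define Wf where "Wf i z = (\<Sum>k\<in>{1..b}-{i}. \<Sum>j\<in>Tr k. if lam < z k j then 1 else (0::real))"
    for i and z :: "nat \<Rightarrow> nat \<Rightarrow> real"
  define W where "W i \<omega> = Wf i (\<lambda>k j. P k j \<omega>)" for i \<omega>
  define N where "N = (\<Sum>k\<in>{1..b}. card (Tr k))"
  define F where "F i j = {\<omega>\<in>space M. P i j \<omega> \<le> c / (S + W i \<omega>)}" for i j
  define G where "G i j = {\<omega>\<in>space M. lam < P i j \<omega>}" for i j
  define g where "g i j \<omega> = indicator (G i j) \<omega> / (S + W i \<omega>)" for i j \<omega>
  show ?thesis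
  proof (cases "T = {}")
    case True then show ?thesis using a0 by simp
  next
    case Tne: False
    have Tr_sub: "Tr k \<subseteq> {1..s k}" for k using true_nulls by (auto simp: Tr_def hyp_idx_def)
    have finTr: "finite (Tr k)" for k using Tr_sub finite_subset by blast
    have T_Sigma: "T = Sigma {1..b} Tr" using true_nulls by (auto simp: Tr_def hyp_idx_def)
    have finT: "finite T" using T_Sigma finTr by simp
    have S_ge: "real (s k) \<le> S" if "k \<in> {1..b}" for k
      using that by (auto simp: S_def s_max_def)
    have S1: "S \<ge> 1"
    proof -
      obtain i j where ij: "(i,j) \<in> T" using Tne by auto
      then have "i \<in> {1..b}" "1 \<le> j" "j \<le> s i" using true_nulls by (auto simp: hyp_idx_def)
      then show ?thesis using S_ge[of i] by simp
    qed
    have Pm: "P i j \<in> borel_measurable M" if "(i,j) \<in> T" for i j using that true_nulls meas by auto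
    have Wm: "W i \<in> borel_measurable M" for i
      unfolding W_def Wf_def
      by (intro borel_measurable_sum ind_meas Pm) (auto simp: Tr_def)
    have Wvals: "\<exists>v\<le>N. W i \<omega> = real v" for i \<omega>
    proof -
      define v where "v = (\<Sum>k\<in>{1..b}-{i}. \<Sum>j\<in>Tr k. if lam < P k j \<omega> then 1 else (0::nat))"
      have "W i \<omega> = real v" unfolding W_def Wf_def v_def by (auto simp: of_nat_sum intro!: sum.cong)
      moreover have "v \<le> N"
      proof -
        have "v \<le> (\<Sum>k\<in>{1..b}-{i}. card (Tr k))"
          unfolding v_def
        proof (rule sum_mono)
          fix k
          have "(\<Sum>j\<in>Tr k. if lam < P k j \<omega> then 1 else (0::nat)) \<le> (\<Sum>j\<in>Tr k. 1)"
            by (rule sum_mono) auto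
          then show "(\<Sum>j\<in>Tr k. if lam < P k j \<omega> then 1 else (0::nat)) \<le> card (Tr k)" by simp
        qed
        also have "\<dots> \<le> N" unfolding N_def by (rule sum_mono2) auto
        finally show ?thesis .
      qed
      ultimately show ?thesis by blast
    qed
    have indep_ij: "indep_var borel (P i j) borel (W i)" if ij: "(i,j) \<in> T" for i j
    proof -
      have i: "i \<in> {1..b}" and j: "j \<in> {1..s i}" using ij true_nulls by (auto simp: hyp_idx_def)
      let ?Mb = "\<lambda>i. PiM {1..s i} (\<lambda>_. (borel::real measure))"
      let ?X = "\<lambda>i \<omega>. \<lambda>j\<in>{1..s i}. P i j \<omega>"
      let ?K = "{1..b}-{i}"
      have "indep_var (PiM {i} ?Mb) (\<lambda>\<omega>. restrict (\<lambda>k. ?X k \<omega>) {i})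
                      (PiM ?K ?Mb) (\<lambda>\<omega>. restrict (\<lambda>k. ?X k \<omega>) ?K)"
        by (rule indep_var_restrict[OF indep]) (use i in auto)
      then have "indep_var borel ((\<lambda>z. z i j) \<circ> (\<lambda>\<omega>. restrict (\<lambda>k. ?X k \<omega>) {i}))
                           borel (Wf i \<circ> (\<lambda>\<omega>. restrict (\<lambda>k. ?X k \<omega>) ?K))"
      proof (rule indep_var_compose)
        show "(\<lambda>z. z i j) \<in> borel_measurable (PiM {i} ?Mb)" by (rule comp2_meas) (use j in auto)
        show "Wf i \<in> borel_measurable (PiM ?K ?Mb)"
          unfolding Wf_def
          by (intro borel_measurable_sum ind_meas comp2_meas) (use Tr_sub in force)+
      qed
      moreover have "(\<lambda>z. z i j) \<circ> (\<lambda>\<omega>. restrict (\<lambda>k. ?X k \<omega>) {i}) = P i j"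
        using j by (auto simp: fun_eq_iff)
      moreover have "Wf i \<circ> (\<lambda>\<omega>. restrict (\<lambda>k. ?X k \<omega>) ?K) = W i"
      proof
        fix \<omega>
        show "(Wf i \<circ> (\<lambda>\<omega>. restrict (\<lambda>k. ?X k \<omega>) ?K)) \<omega> = W i \<omega>"
          unfolding W_def Wf_def comp_def
          using Tr_sub by (intro sum.cong refl) (auto simp: subset_iff)
      qed
      ultimately show ?thesis by simp
    qed
    have probW: "prob {\<omega>\<in>space M. P i j \<omega> \<in> A \<and> W i \<omega> = real v}
                 = prob {\<omega>\<in>space M. P i j \<omega> \<in> A} * prob {\<omega>\<in>space M. W i \<omega> = real v}"
      if "(i,j) \<in> T" "A \<in> sets borel" for i j A v
      using indep_event[OF indep_ij[OF that(1)] that(2), of "{real v}"] by simp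
    have key: "prob (F i j) = \<alpha> * expectation (g i j)" if ij: "(i,j) \<in> T" for i j
    proof -
      note [measurable] = Pm[OF ij] Wm
      have "prob (F i j) = (\<Sum>v\<le>N. prob {\<omega>\<in>space M. P i j \<omega> \<le> c / (S + real v) \<and> W i \<omega> = real v})"
        unfolding F_def by (rule decomp[where Phi="\<lambda>\<omega> w. P i j \<omega> \<le> c / (S + w)"]) (use Wvals in auto)
      also have "\<dots> = (\<Sum>v\<le>N. \<alpha> * ((1 - lam) * prob {\<omega>\<in>space M. W i \<omega> = real v} / (S + real v)))"
      proof (rule sum.cong[OF refl])
        fix v
        have c01: "0 \<le> c / (S + real v)" "c / (S + real v) \<le> 1"
        proof -
          have cp: "0 < c" using a0 l1 by (simp add: c_def)
          have c1: "c \<le> 1" unfolding c_def using a0 a1 l0 l1 by (intro mult_le_one) auto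
          have Sv: "1 \<le> S + real v" using S1 by simp
          show "0 \<le> c / (S + real v)" using cp Sv by simp
          show "c / (S + real v) \<le> 1" using c1 Sv by (simp add: divide_le_eq)
        qed
        have "prob {\<omega>\<in>space M. P i j \<omega> \<le> c / (S + real v) \<and> W i \<omega> = real v}
            = prob {\<omega>\<in>space M. P i j \<omega> \<in> {..c / (S + real v)} \<and> W i \<omega> = real v}" by simp
        also have "\<dots> = prob {\<omega>\<in>space M. P i j \<omega> \<in> {..c / (S + real v)}} * prob {\<omega>\<in>space M. W i \<omega> = real v}"
          by (rule probW[OF ij]) simp
        also have "prob {\<omega>\<in>space M. P i j \<omega> \<in> {..c / (S + real v)}} = c / (S + real v)"
          using unif_le[OF Pm[OF ij] unif[OF ij] c01] by simp
        finally show "prob {\<omega>\<in>space M. P i j \<omega> \<le> c / (S + real v) \<and> W i \<omega> = real v}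
            = \<alpha> * ((1 - lam) * prob {\<omega>\<in>space M. W i \<omega> = real v} / (S + real v))"
          by (simp add: c_def)
      qed
      also have "\<dots> = \<alpha> * (\<Sum>v\<le>N. prob (G i j \<inter> {\<omega>\<in>space M. W i \<omega> = real v}) / (S + real v))"
      proof -
        have "prob (G i j \<inter> {\<omega>\<in>space M. W i \<omega> = real v}) = (1 - lam) * prob {\<omega>\<in>space M. W i \<omega> = real v}" for v
        proof -
          have "prob (G i j \<inter> {\<omega>\<in>space M. W i \<omega> = real v})
              = prob {\<omega>\<in>space M. P i j \<omega> \<in> {lam<..} \<and> W i \<omega> = real v}"
            unfolding G_def by (auto intro!: arg_cong[where f=prob])
          also have "\<dots> = prob {\<omega>\<in>space M. P i j \<omega> \<in> {lam<..}} * prob {\<omega>\<in>space M. W i \<omega> = real v}"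
            by (rule probW[OF ij]) simp
          also have "prob {\<omega>\<in>space M. P i j \<omega> \<in> {lam<..}} = 1 - lam"
            using unif_gt[OF Pm[OF ij] unif[OF ij], of lam] l0 l1 by simp
          finally show ?thesis .
        qed
        then show ?thesis by (simp add: sum_distrib_left)
      qed
      also have "\<dots> = \<alpha> * expectation (g i j)"
        unfolding g_def
        by (subst integral_decomp(1)[where N=N]) (use Wvals S1 in \<open>auto simp: G_def\<close>)
      finally show ?thesis .
    qed
    have gint: "integrable M (g i j)" if ij: "(i,j) \<in> T" for i j
    proof -
      note [measurable] = Pm[OF ij] Wm
      show ?thesis unfolding g_def
        by (rule integral_decomp(2)[where N=N]) (use Wvals S1 in \<open>auto simp: G_def\<close>)
    qed
    have pw: "(\<Sum>p\<in>T. g (fst p) (snd p) \<omega>) \<le> 1" if om: "\<omega> \<in> space M" for \<omega>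
    proof -
      define Y where "Y k = (\<Sum>j\<in>Tr k. if lam < P k j \<omega> then 1 else (0::real))" for k
      have "(\<Sum>i\<in>{1..b}. \<Sum>j\<in>Tr i. g i j \<omega>) = (\<Sum>p\<in>Sigma {1..b} Tr. case p of (i,j) \<Rightarrow> g i j \<omega>)"
        using finTr by (intro sum.Sigma) auto
      also have "\<dots> = (\<Sum>p\<in>T. g (fst p) (snd p) \<omega>)"
        unfolding T_Sigma by (simp add: case_prod_unfold)
      finally have "(\<Sum>p\<in>T. g (fst p) (snd p) \<omega>) = (\<Sum>i\<in>{1..b}. \<Sum>j\<in>Tr i. g i j \<omega>)" by simp
      also have "\<dots> = (\<Sum>i\<in>{1..b}. Y i / (S + (\<Sum>k\<in>{1..b}-{i}. Y k)))"
      proof (rule sum.cong[OF refl])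
        fix i
        have WY: "W i \<omega> = (\<Sum>k\<in>{1..b}-{i}. Y k)" unfolding W_def Wf_def Y_def by simp
        have "(\<Sum>j\<in>Tr i. g i j \<omega>) = (\<Sum>j\<in>Tr i. (if lam < P i j \<omega> then 1 else 0) / (S + W i \<omega>))"
          unfolding g_def G_def using om by (intro sum.cong refl) (simp add: indicator_def)
        also have "\<dots> = Y i / (S + W i \<omega>)" unfolding Y_def by (rule sum_divide_distrib[symmetric])
        finally show "(\<Sum>j\<in>Tr i. g i j \<omega>) = Y i / (S + (\<Sum>k\<in>{1..b}-{i}. Y k))" using WY by simp
      qed
      also have "\<dots> \<le> 1"
      proof (rule frac_sum_le1)
        fix k assume k: "k \<in> {1..b}"
        have "Y k \<le> (\<Sum>j\<in>Tr k. 1)" unfolding Y_def by (rule sum_mono) auto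
        also have "\<dots> = real (card (Tr k))" by simp
        also have "\<dots> \<le> real (s k)" using card_mono[OF _ Tr_sub[of k]] by simp
        finally show "0 \<le> Y k \<and> Y k \<le> S" using S_ge[OF k] unfolding Y_def
          by (auto intro: sum_nonneg)
      qed (use S1 in auto)
      finally show ?thesis .
    qed
    have sub: "{\<omega> \<in> space M. \<exists>(i, j) \<in> T. P i j \<omega> \<le> \<alpha> / n0_hat b s P lam \<omega>}
               \<subseteq> (\<Union>p\<in>T. F (fst p) (snd p))"
    proof safe
      fix \<omega> i j assume om: "\<omega> \<in> space M" and ij: "(i,j) \<in> T"
        and le: "P i j \<omega> \<le> \<alpha> / n0_hat b s P lam \<omega>"
      have i: "i \<in> {1..b}" using ij true_nulls by (auto simp: hyp_idx_def)
      let ?K = "{1..b}-{i}"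
      let ?Q = "\<lambda>p. lam < P (fst p) (snd p) \<omega>"
      have "W i \<omega> = (\<Sum>p\<in>Sigma ?K Tr. if ?Q p then 1 else (0::real))"
        unfolding W_def Wf_def using finTr by (subst sum.Sigma) (auto simp: case_prod_beta)
      also have "\<dots> = real (card {p\<in>Sigma ?K Tr. ?Q p})"
        using finTr by (simp add: sum.inter_filter[symmetric])
      finally have W1: "W i \<omega> = real (card {p\<in>Sigma ?K Tr. ?Q p})" .
      have "card {p\<in>Sigma ?K Tr. ?Q p} \<le> card {p\<in>hyp_idx b s. ?Q p}"
        by (rule card_mono) (use finite_hyp_idx true_nulls T_Sigma in auto)
      moreover have "card (hyp_idx b s) = card {p\<in>hyp_idx b s. ?Q p} + R_count b s P lam \<omega>"
      proof -
        have "R_count b s P lam \<omega> = card {p\<in>hyp_idx b s. \<not> ?Q p}"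
          unfolding R_count_def by (rule arg_cong[where f=card]) (auto simp: not_less)
        moreover have "hyp_idx b s = {p\<in>hyp_idx b s. ?Q p} \<union> {p\<in>hyp_idx b s. \<not> ?Q p}" by auto
        ultimately show ?thesis using finite_hyp_idx
          by (metis (no_types, lifting) card_Un_disjoint disjoint_iff finite_Un mem_Collect_eq)
      qed
      ultimately have Wle: "W i \<omega> \<le> real (n_total b s) - real (R_count b s P lam \<omega>)"
        using W1 card_hyp_idx by simp
      have Wn: "0 \<le> W i \<omega>" using W1 by simp
      have n0: "(S + W i \<omega>) / (1 - lam) \<le> n0_hat b s P lam \<omega>"
        unfolding n0_hat_def using Wle l1 by (auto simp: S_def intro!: divide_right_mono)
      have pos: "0 < (S + W i \<omega>) / (1 - lam)" using S1 Wn l1 by simp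
      have "\<alpha> / n0_hat b s P lam \<omega> \<le> \<alpha> / ((S + W i \<omega>) / (1 - lam))"
      proof (rule divide_left_mono)
        have "0 < n0_hat b s P lam \<omega>" using n0 pos by linarith
        then show "0 < n0_hat b s P lam \<omega> * ((S + W i \<omega>) / (1 - lam))" using pos by (rule mult_pos_pos)
      qed (use n0 a0 in auto)
      also have "\<dots> = c / (S + W i \<omega>)" by (simp add: c_def)
      finally have "P i j \<omega> \<le> c / (S + W i \<omega>)" using le by linarith
      then show "\<omega> \<in> (\<Union>p\<in>T. F (fst p) (snd p))" using om ij by (auto simp: F_def intro!: bexI[of _ "(i,j)"])
    qed
    have Fev: "F (fst p) (snd p) \<in> events" if "p \<in> T" for p
    proof -
      obtain i j where p: "p = (i,j)" by (cases p)
      note [measurable] = Pm[OF that[unfolded p]] Wm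
      show ?thesis unfolding p F_def fst_conv snd_conv by measurable
    qed
    have "measure M {\<omega> \<in> space M. \<exists>(i, j) \<in> T. P i j \<omega> \<le> \<alpha> / n0_hat b s P lam \<omega>}
          \<le> prob (\<Union>p\<in>T. F (fst p) (snd p))"
    proof (cases "{\<omega> \<in> space M. \<exists>(i, j) \<in> T. P i j \<omega> \<le> \<alpha> / n0_hat b s P lam \<omega>} \<in> events")
      case True
      then show ?thesis using sub Fev finT by (intro finite_measure_mono) auto
    next
      case False
      then show ?thesis by (simp add: measure_notin_sets)
    qed
    also have "\<dots> \<le> (\<Sum>p\<in>T. prob (F (fst p) (snd p)))"
      using Fev finT by (intro finite_measure_subadditive_finite) auto
    also have "\<dots> = (\<Sum>p\<in>T. \<alpha> * expectation (g (fst p) (snd p)))"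
      by (intro sum.cong refl) (auto intro: key)
    also have "\<dots> = \<alpha> * expectation (\<lambda>\<omega>. \<Sum>p\<in>T. g (fst p) (snd p) \<omega>)"
      by (subst Bochner_Integration.integral_sum) (auto intro: gint simp: sum_distrib_left)
    also have "\<dots> \<le> \<alpha> * 1"
    proof (rule mult_left_mono)
      show "expectation (\<lambda>\<omega>. \<Sum>p\<in>T. g (fst p) (snd p) \<omega>) \<le> 1"
        by (rule integral_le_const) (auto intro!: gint pw Bochner_Integration.integrable_sum)
    qed (use a0 in simp)
    finally show ?thesis by simp
  qed
qed

end
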